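(* Let $\sigma < -2$ and $p > -1-\sigma$ be such that $a := \frac{\sigma+2}{1-p} = \frac12$, and let $c_a = \big(a(1-a)\big)^{1/(p-1)}$ and $u_a(x) = c_a x^a$. Then there is a positive solution $u \in C^2(0,+\infty)$ of $u''(x) + x^\sigma u(x)^p = 0$ for $x>0$ such that $u - u_a$ changes sign infinitely many times near $x=0$, $u/u_a$ is bounded on $(0,+\infty)$, and $u(x)/u_a(x)$ does not converge as $x \searrow 0$.
   Context: The function $u_a$ is itself a positive solution of the same equation on $(0,+\infty)$. *)

theory Defs
  imports "HOL-Analysis.Analysis"
begin

definition exp_a :: "real \<Rightarrow> real \<Rightarrow> real" where
  "exp_a \<sigma> p = (\<sigma> + 2) / (1 - p)"

definition const_a :: "real \<Rightarrow> real \<Rightarrow> real" where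
  "const_a \<sigma> p = (exp_a \<sigma> p * (1 - exp_a \<sigma> p)) powr (1 / (p - 1))"

definition u_sing :: "real \<Rightarrow> real \<Rightarrow> real \<Rightarrow> real" where
  "u_sing \<sigma> p x = const_a \<sigma> p * x powr (exp_a \<sigma> p)"

definition sign_changes_inf_near_0 :: "(real \<Rightarrow> real) \<Rightarrow> bool" where
  "sign_changes_inf_near_0 f \<longleftrightarrow>
     (\<forall>\<epsilon>>0. (\<exists>x. 0 < x \<and> x < \<epsilon> \<and> f x > 0) \<and> (\<exists>y. 0 < y \<and> y < \<epsilon> \<and> f y < 0))"

end

theory Submission
  imports Defs
begin


lemma sgn_mul_self: "sgn (x::real) * x = \<bar>x\<bar>"
  by (simp add: sgn_real_def abs_if)

lemma deriv_from_limit: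
  fixes f f' :: "real \<Rightarrow> real"
  assumes cf: "isCont f x" and d: "d > 0"
    and der: "\<And>z. z \<noteq> x \<Longrightarrow> \<bar>z - x\<bar> < d \<Longrightarrow> (f has_real_derivative f' z) (at z)"
    and cf': "isCont f' x"
  shows "(f has_real_derivative f' x) (at x)"
proof -
  have ev: "eventually (\<lambda>z. z \<noteq> x \<and> \<bar>z - x\<bar> < d) (at x)"
    using d by (auto simp: eventually_at dist_real_def intro!: exI[of _ d])
  have "((\<lambda>z. (f z - f x) / (z - x)) \<longlongrightarrow> f' x) (at x)"
  proof (rule lhopital[where f' = f' and g' = "\<lambda>_. 1"])
    show "((\<lambda>z. f z - f x) \<longlongrightarrow> 0) (at x)"
      using cf by (simp add: isCont_def LIM_zero)
    show "((\<lambda>z. z - x) \<longlongrightarrow> 0) (at x)"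
      by (intro tendsto_eq_intros) auto
    show "\<forall>\<^sub>F z in at x. z - x \<noteq> 0" using ev by (rule eventually_mono) auto
    show "\<forall>\<^sub>F z in at x. (1::real) \<noteq> 0" by simp
    show "\<forall>\<^sub>F z in at x. ((\<lambda>z. f z - f x) has_real_derivative f' z) (at z)"
      using ev by (rule eventually_mono) (auto intro!: derivative_eq_intros der)
    show "\<forall>\<^sub>F z in at x. ((\<lambda>z. z - x) has_real_derivative 1) (at z)"
      by (intro always_eventually allI) (auto intro!: derivative_eq_intros)
    show "((\<lambda>z. f' z / 1) \<longlongrightarrow> f' x) (at x)"
      using cf' by (simp add: isCont_def)
  qed
  then show ?thesis by (simp add: has_field_derivative_iff)
qed

locale osc =
  fixes G F :: "real \<Rightarrow> real" and \<alpha> \<beta> m1 m2 :: real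
  assumes ab: "\<alpha> < \<beta>"
    and dG: "\<And>x. \<alpha> \<le> x \<Longrightarrow> x \<le> \<beta> \<Longrightarrow> (G has_real_derivative F x) (at x)"
    and cF: "continuous_on {\<alpha>..\<beta>} F"
    and m1: "0 < m1"
    and bnd: "\<And>x. \<alpha> \<le> x \<Longrightarrow> x \<le> \<beta> \<Longrightarrow>
       m1 * ((x - \<alpha>) * (\<beta> - x)) \<le> G x \<and> G x \<le> m2 * ((x - \<alpha>) * (\<beta> - x))"
begin

definition sp :: "real \<Rightarrow> real" where "sp \<theta> = \<alpha> + (\<beta> - \<alpha>) * (1 - cos \<theta>) / 2"
definition gl :: real where "gl = sqrt (1 / (2 * m2))"
definition gu :: real where "gu = sqrt (1 / (2 * m1))"
definition gg :: "real \<Rightarrow> real" where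
  "gg \<theta> = (if sin \<theta> = 0 then gl else sqrt ((sp \<theta> - \<alpha>) * (\<beta> - sp \<theta>) / (2 * G (sp \<theta>))))"

lemma sp_range: "\<alpha> \<le> sp \<theta>" "sp \<theta> \<le> \<beta>"
proof -
  have "(\<beta> - \<alpha>) * (1 - cos \<theta>) \<le> (\<beta> - \<alpha>) * 2"
    using ab cos_ge_minus_one[of \<theta>] by (intro mult_left_mono) auto
  moreover have "0 \<le> (\<beta> - \<alpha>) * (1 - cos \<theta>)"
    using ab cos_le_one[of \<theta>] by (intro mult_nonneg_nonneg) auto
  ultimately show "\<alpha> \<le> sp \<theta>" "sp \<theta> \<le> \<beta>" by (auto simp: sp_def)
qed

lemma sp_prod: "(sp \<theta> - \<alpha>) * (\<beta> - sp \<theta>) = ((\<beta> - \<alpha>) / 2)^2 * (sin \<theta>)^2"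
proof -
  have "(sin \<theta>)^2 = 1 - (cos \<theta>)^2" by (simp add: sin_squared_eq)
  moreover have "sp \<theta> - \<alpha> = ((\<beta> - \<alpha>) / 2) * (1 - cos \<theta>)" by (simp add: sp_def)
  moreover have "\<beta> - sp \<theta> = ((\<beta> - \<alpha>) / 2) * (1 + cos \<theta>)" by (simp add: sp_def field_simps)
  ultimately show ?thesis by (simp only:) (simp add: power2_eq_square algebra_simps)
qed

lemma sp_int: assumes "sin \<theta> \<noteq> 0" shows "\<alpha> < sp \<theta>" "sp \<theta> < \<beta>"
proof -
  have "(sp \<theta> - \<alpha>) * (\<beta> - sp \<theta>) > 0" using assms ab by (simp add: sp_prod)
  then show "\<alpha> < sp \<theta>" "sp \<theta> < \<beta>" using sp_range[of \<theta>]
    by (auto simp: zero_less_mult_iff)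
qed

lemma m12: "m1 \<le> m2"
proof -
  define x where "x = (\<alpha> + \<beta>) / 2"
  have "0 < (x - \<alpha>) * (\<beta> - x)" using ab by (simp add: x_def)
  moreover have "m1 * ((x - \<alpha>) * (\<beta> - x)) \<le> m2 * ((x - \<alpha>) * (\<beta> - x))"
  proof -
    have "\<alpha> \<le> x" "x \<le> \<beta>" using ab by (auto simp: x_def)
    from bnd[OF this] show ?thesis by linarith
  qed
  ultimately show ?thesis by (meson mult_right_le_imp_le)
qed

lemma G_pos: assumes "\<alpha> < x" "x < \<beta>" shows "G x > 0"
  using bnd[of x] assms m1 by (smt (verit) mult_pos_pos)

lemma G_cont: "continuous_on {\<alpha>..\<beta>} G"
  using dG by (meson DERIV_isCont atLeastAtMost_iff continuous_at_imp_continuous_on)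

lemma Gs_cont: "continuous_on UNIV (\<lambda>\<theta>. G (sp \<theta>))"
proof (rule continuous_on_compose2[OF G_cont])
  show "continuous_on UNIV sp" unfolding sp_def by (intro continuous_intros) auto
  show "sp ` UNIV \<subseteq> {\<alpha>..\<beta>}" using sp_range by auto
qed

lemma gl_pos: "0 < gl" using m1 m12 by (simp add: gl_def)

lemma gg_bounds: "gl \<le> gg \<theta> \<and> gg \<theta> \<le> gu"
proof (cases "sin \<theta> = 0")
  case True then show ?thesis using m1 m12 by (simp add: gg_def gl_def gu_def frac_le)
next
  case False
  define q where "q = (sp \<theta> - \<alpha>) * (\<beta> - sp \<theta>)"
  have q: "q > 0" using sp_int[OF False] by (simp add: q_def)
  have b: "m1 * q \<le> G (sp \<theta>)" "G (sp \<theta>) \<le> m2 * q"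
    using bnd[OF sp_range] by (auto simp: q_def)
  have Gp: "G (sp \<theta>) > 0" using b m1 q by (smt (verit) mult_pos_pos)
  have "1 / (2 * m2) \<le> q / (2 * G (sp \<theta>))"
    using b q Gp m1 m12 by (simp add: field_simps)
  moreover have "q / (2 * G (sp \<theta>)) \<le> 1 / (2 * m1)"
    using b q Gp m1 by (simp add: field_simps)
  ultimately show ?thesis using False
    by (simp add: gg_def gl_def gu_def q_def)
qed


lemma gg_meas: "gg \<in> borel_measurable borel"
proof -
  have c1: "sp \<in> borel_measurable borel" unfolding sp_def
    by (intro borel_measurable_continuous_onI continuous_intros) auto
  have c2: "(\<lambda>\<theta>. G (sp \<theta>)) \<in> borel_measurable borel"
    using Gs_cont by (rule borel_measurable_continuous_onI)
  show ?thesis unfolding gg_def using c1 c2 by measurable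
qed

lemma gg_int: "gg integrable_on {a..b}"
proof (rule measurable_bounded_by_integrable_imp_integrable_real[where g="\<lambda>_. gu"])
  show "gg \<in> borel_measurable (lebesgue_on {a..b})"
    using gg_meas by (intro measurable_restrict_space1 measurable_completion) (simp add: measurable_lborel1)
  show "(\<lambda>_. gu) integrable_on {a..b}" by (rule integrable_const_ivl)
  show "\<bar>gg x\<bar> \<le> gu" for x using gg_bounds[of x] gl_pos by auto
qed auto

definition tau :: "real \<Rightarrow> real" where
  "tau \<theta> = (if 0 \<le> \<theta> then integral {0..\<theta>} gg else - integral {\<theta>..0} gg)"

lemma tau_diff: assumes "a \<le> b" shows "tau b - tau a = integral {a..b} gg"
proof -
  consider "0 \<le> a" | "b < 0" | "a < 0" "0 \<le> b" using assms by linarith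
  then show ?thesis
  proof cases
    case 1
    then show ?thesis using Henstock_Kurzweil_Integration.integral_combine[OF 1 assms gg_int] assms by (simp add: tau_def)
  next
    case 2
    then show ?thesis using Henstock_Kurzweil_Integration.integral_combine[OF assms _ gg_int, of 0] assms by (simp add: tau_def)
  next
    case 3
    then show ?thesis using Henstock_Kurzweil_Integration.integral_combine[of a 0 b, OF _ _ gg_int] by (simp add: tau_def)
  qed
qed

lemma tau_bounds: assumes "a \<le> b" shows "gl * (b - a) \<le> tau b - tau a \<and> tau b - tau a \<le> gu * (b - a)"
proof -
  have "integral {a..b} (\<lambda>_. gl) \<le> integral {a..b} gg"
    by (rule integral_le) (auto simp: gg_int gg_bounds)
  moreover have "integral {a..b} gg \<le> integral {a..b} (\<lambda>_. gu)"
    by (rule integral_le) (auto simp: gg_int gg_bounds)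
  ultimately show ?thesis using assms by (simp add: tau_diff mult.commute)
qed

lemma tau0: "tau 0 = 0" by (simp add: tau_def)

lemma tau_mono: "a < b \<Longrightarrow> tau a < tau b"
  using tau_bounds[of a b] gl_pos by (smt (verit) mult_pos_pos)

lemma tau_cont: "continuous_on UNIV tau"
proof -
  have "\<bar>tau x - tau y\<bar> \<le> gu * \<bar>x - y\<bar>" for x y
  proof (cases "x \<le> y")
    case True then show ?thesis using tau_bounds[of x y] gl_pos
      by (smt (verit, best) mult_nonneg_nonneg)
  next
    case False then show ?thesis using tau_bounds[of y x] gl_pos
      by (smt (verit, best) mult_nonneg_nonneg)
  qed
  then show ?thesis
    by (intro lipschitz_on_continuous_on[where L=gu]) (auto intro!: lipschitz_onI simp: dist_real_def gu_def less_imp_le[OF m1])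
qed

lemma tau_isCont: "isCont tau x"
  using tau_cont by (simp add: continuous_on_eq_continuous_at)

lemma tau_surj: "surj tau"
proof -
  have "\<exists>x. tau x = t" for t
  proof -
    define r where "r = \<bar>t\<bar> / gl"
    have r: "r \<ge> 0" "gl * r = \<bar>t\<bar>" using gl_pos by (auto simp: r_def)
    have "tau (-r) \<le> t" using tau_bounds[of "-r" 0] r tau0 by auto
    moreover have "t \<le> tau r" using tau_bounds[of 0 r] r tau0 by auto
    ultimately show ?thesis using r IVT[of tau "-r" t r] tau_isCont by auto
  qed
  then show ?thesis by (metis surjI)
qed


definition th :: "real \<Rightarrow> real" where "th = inv tau"

lemma tau_th: "tau (th t) = t"
  unfolding th_def using tau_surj by (simp add: surj_f_inv_f)

lemma tau_inj: "inj tau"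
  by (metis injI linorder_neqE_linordered_idom order_less_irrefl tau_mono)

lemma th_tau: "th (tau \<theta>) = \<theta>"
  unfolding th_def using tau_inj by simp

lemma th_lip: "\<bar>th a - th b\<bar> \<le> \<bar>a - b\<bar> / gl"
proof -
  have "gl * \<bar>th a - th b\<bar> \<le> \<bar>tau (th a) - tau (th b)\<bar>"
  proof (cases "th a \<le> th b")
    case True then show ?thesis using tau_bounds[of "th a" "th b"] gl_pos by auto
  next
    case False then show ?thesis using tau_bounds[of "th b" "th a"] gl_pos by auto
  qed
  then show ?thesis using gl_pos by (simp add: tau_th field_simps)
qed

lemma th_isCont: "isCont th t"
proof -
  have "(1/gl)-lipschitz_on UNIV th"
    using th_lip gl_pos by (intro lipschitz_onI) (auto simp: dist_real_def)
  then have "continuous_on UNIV th" by (rule lipschitz_on_continuous_on)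
  then show ?thesis by (simp add: continuous_on_eq_continuous_at)
qed

lemma th_mono: "a < b \<Longrightarrow> th a < th b"
  by (metis linorder_neqE_linordered_idom order_less_asym tau_mono tau_th)

definition Hs :: "real \<Rightarrow> real" where
  "Hs \<theta> = sqrt ((sp \<theta> - \<alpha>) * (\<beta> - sp \<theta>) / (2 * G (sp \<theta>)))"

lemma open_sin: "open {\<theta>::real. sin \<theta> \<noteq> 0}"
proof -
  have "continuous_on UNIV (\<lambda>x::real. sin x)" by (intro continuous_intros)
  then show ?thesis by (intro open_Collect_neq) (auto simp: continuous_on_const)
qed

lemma gg_isCont: assumes "sin \<theta> \<noteq> 0" shows "isCont gg \<theta>"
proof -
  have ev: "eventually (\<lambda>x. Hs x = gg x) (nhds \<theta>)"
  proof -
    have "eventually (\<lambda>x. x \<in> {\<theta>. sin \<theta> \<noteq> 0}) (nhds \<theta>)"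
      using eventually_nhds_in_open[OF open_sin] assms by simp
    then show ?thesis by (rule eventually_mono) (auto simp: gg_def Hs_def)
  qed
  have c1: "isCont sp \<theta>" unfolding sp_def by (intro continuous_intros) auto
  have c2: "isCont (\<lambda>\<theta>. G (sp \<theta>)) \<theta>" using Gs_cont by (simp add: continuous_on_eq_continuous_at)
  have "G (sp \<theta>) \<noteq> 0" using G_pos sp_int[OF assms] by (simp add: order_less_imp_not_eq2)
  then have "isCont Hs \<theta>" unfolding Hs_def using c1 c2
    by (intro continuous_intros) auto
  then show ?thesis using isCont_cong[OF ev] by simp
qed

lemma tau_deriv: assumes "sin \<theta> \<noteq> 0" shows "(tau has_real_derivative gg \<theta>) (at \<theta>)"
proof -
  define a b where "a = \<theta> - 1" and "b = \<theta> + 1"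
  have "((\<lambda>u. integral {a..u} gg) has_vector_derivative gg \<theta>) (at \<theta> within ({a..b} - {}))"
  proof (rule integral_has_vector_derivative_continuous_at[OF gg_int])
    show "\<theta> \<in> {a..b} - {}" by (simp add: a_def b_def)
    show "continuous (at \<theta> within {a..b} - {}) gg"
      using gg_isCont[OF assms] by (rule continuous_at_imp_continuous_within)
  qed simp
  then have H1: "((\<lambda>u. integral {a..u} gg) has_vector_derivative gg \<theta>) (at \<theta> within {a..b})"
    by (simp only: Diff_empty)
  have H2: "\<theta> \<in> interior {a..b}" unfolding a_def b_def interior_atLeastAtMost_real by simp
  have "((\<lambda>u. integral {a..u} gg) has_real_derivative gg \<theta>) (at \<theta>)"
    using H1 unfolding at_within_interior[OF H2] has_real_derivative_iff_has_vector_derivative .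
  then have "((\<lambda>u. tau a + integral {a..u} gg) has_real_derivative 0 + gg \<theta>) (at \<theta>)"
    by (rule DERIV_add[OF DERIV_const])
  then have "((\<lambda>u. tau a + integral {a..u} gg) has_real_derivative gg \<theta>) (at \<theta>)"
    by (simp only: add.left_neutral)
  then show ?thesis
  proof (rule has_field_derivative_transform_within_open[where S="{a<..<b}"])
    show "\<theta> \<in> {a<..<b}" by (simp add: a_def b_def)
    show "tau a + integral {a..x} gg = tau x" if "x \<in> {a<..<b}" for x
    proof -
      have "a \<le> x" using that by simp
      from tau_diff[OF this] show ?thesis by linarith
    qed
  qed auto
qed

lemma th_deriv: assumes "sin (th t) \<noteq> 0" shows "(th has_real_derivative inverse (gg (th t))) (at t)"
proof (rule DERIV_inverse_function[where f=tau and a="t-1" and b="t+1"])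
  show "(tau has_real_derivative gg (th t)) (at (th t))" using tau_deriv[OF assms] .
  show "gg (th t) \<noteq> 0" using gg_bounds[of "th t"] gl_pos by auto
qed (simp_all add: tau_th th_isCont)


definition Y :: "real \<Rightarrow> real" where "Y \<theta> = sgn (sin \<theta>) * sqrt (2 * G (sp \<theta>))"
definition ww :: "real \<Rightarrow> real" where "ww t = sp (th t)"
definition yy :: "real \<Rightarrow> real" where "yy t = Y (th t)"

lemma sp_isCont: "isCont sp \<theta>" unfolding sp_def by (intro continuous_intros) auto

lemma Gs_isCont: "isCont (\<lambda>\<theta>. G (sp \<theta>)) \<theta>"
  using Gs_cont by (simp add: continuous_on_eq_continuous_at)

lemma G_node: assumes "sin \<theta> = 0" shows "G (sp \<theta>) = 0"
proof -
  have P: "(sp \<theta> - \<alpha>) * (\<beta> - sp \<theta>) = 0" using assms by (simp add: sp_prod)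
  have "m1 * 0 \<le> G (sp \<theta>) \<and> G (sp \<theta>) \<le> m2 * 0"
    using bnd[OF sp_range(1) sp_range(2), of \<theta>] unfolding P .
  then show ?thesis by simp
qed

lemma Gs_nonneg: "0 \<le> G (sp \<theta>)"
proof -
  have "0 \<le> (sp \<theta> - \<alpha>) * (\<beta> - sp \<theta>)" using sp_range[of \<theta>] by simp
  then have "0 \<le> m1 * ((sp \<theta> - \<alpha>) * (\<beta> - sp \<theta>))" using m1 by simp
  then show ?thesis using bnd[OF sp_range(1) sp_range(2), of \<theta>] by linarith
qed

lemma Y_isCont: "isCont Y \<theta>"
proof (cases "sin \<theta> = 0")
  case False
  have "isCont (\<lambda>x. sgn (sin x)) \<theta>" using False by (intro continuous_intros) auto
  then show ?thesis unfolding Y_def using Gs_isCont False by (intro continuous_intros) auto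
next
  case True
  have Y0: "Y \<theta> = 0" using True by (simp add: Y_def)
  have "((\<lambda>x. sqrt (2 * G (sp x))) \<longlongrightarrow> sqrt (2 * G (sp \<theta>))) (at \<theta>)"
    using Gs_isCont by (intro tendsto_intros) (simp add: isCont_def)
  then have l0: "((\<lambda>x. sqrt (2 * G (sp x))) \<longlongrightarrow> 0) (at \<theta>)" using G_node[OF True] by simp
  have "(Y \<longlongrightarrow> 0) (at \<theta>)"
  proof (rule Lim_null_comparison[OF _ l0])
    show "\<forall>\<^sub>F x in at \<theta>. norm (Y x) \<le> sqrt (2 * G (sp x))"
      by (intro always_eventually allI) (auto simp: Y_def abs_mult sgn_real_def Gs_nonneg)
  qed
  then show ?thesis by (simp add: isCont_def Y0)
qed

lemma sp_deriv: "(sp has_real_derivative ((\<beta> - \<alpha>) * sin \<theta> / 2)) (at \<theta>)"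
  unfolding sp_def by (auto intro!: derivative_eq_intros)

lemma key_alg: assumes "sin \<theta> \<noteq> 0"
  shows "gg \<theta> * sqrt (2 * G (sp \<theta>)) = (\<beta> - \<alpha>) / 2 * \<bar>sin \<theta>\<bar>"
proof -
  have Gp: "G (sp \<theta>) > 0" using G_pos sp_int[OF assms] by simp
  have "gg \<theta> = sqrt ((sp \<theta> - \<alpha>) * (\<beta> - sp \<theta>) / (2 * G (sp \<theta>)))"
    using assms by (simp add: gg_def)
  then have "gg \<theta> * sqrt (2 * G (sp \<theta>)) = sqrt ((sp \<theta> - \<alpha>) * (\<beta> - sp \<theta>) / (2 * G (sp \<theta>)) * (2 * G (sp \<theta>)))"
    by (metis real_sqrt_mult)
  also have "\<dots> = sqrt ((sp \<theta> - \<alpha>) * (\<beta> - sp \<theta>))" using Gp by simp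
  also have "\<dots> = sqrt (((\<beta> - \<alpha>) / 2 * \<bar>sin \<theta>\<bar>)^2)"
    by (simp only: sp_prod power_mult_distrib power2_abs)
  also have "\<dots> = (\<beta> - \<alpha>) / 2 * \<bar>sin \<theta>\<bar>" using ab by simp
  finally show ?thesis .
qed

lemma Y_deriv: assumes "sin \<theta> \<noteq> 0"
  shows "(Y has_real_derivative sgn (sin \<theta>) * (F (sp \<theta>) * ((\<beta> - \<alpha>) * sin \<theta> / 2)) / sqrt (2 * G (sp \<theta>))) (at \<theta>)"
proof -
  have Gp: "G (sp \<theta>) > 0" using G_pos sp_int[OF assms] by simp
  have d1: "((\<lambda>x. G (sp x)) has_real_derivative F (sp \<theta>) * ((\<beta> - \<alpha>) * sin \<theta> / 2)) (at \<theta>)"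
    by (rule DERIV_chain2[OF dG[OF sp_range] sp_deriv])
  have d2: "((\<lambda>x. sqrt (2 * G (sp x))) has_real_derivative
      inverse (sqrt (2 * G (sp \<theta>))) / 2 * (2 * (F (sp \<theta>) * ((\<beta> - \<alpha>) * sin \<theta> / 2)))) (at \<theta>)"
    using Gp by (intro DERIV_chain2[OF DERIV_real_sqrt] DERIV_cmult d1) simp
  have d3: "((\<lambda>x. sgn (sin \<theta>) * sqrt (2 * G (sp x))) has_real_derivative
      sgn (sin \<theta>) * (inverse (sqrt (2 * G (sp \<theta>))) / 2 * (2 * (F (sp \<theta>) * ((\<beta> - \<alpha>) * sin \<theta> / 2))))) (at \<theta>)"
    by (rule DERIV_cmult[OF d2])
  have eq: "sgn (sin \<theta>) * (inverse (sqrt (2 * G (sp \<theta>))) / 2 * (2 * (F (sp \<theta>) * ((\<beta> - \<alpha>) * sin \<theta> / 2))))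
      = sgn (sin \<theta>) * (F (sp \<theta>) * ((\<beta> - \<alpha>) * sin \<theta> / 2)) / sqrt (2 * G (sp \<theta>))"
  proof -
    have "sqrt (2 * G (sp \<theta>)) \<noteq> 0" using Gp by simp
    then show ?thesis by (simp add: field_simps)
  qed
  have op: "open {x. 0 < sin x * sin \<theta>}"
    by (intro open_Collect_less continuous_intros)
  show ?thesis
  proof (rule has_field_derivative_transform_within_open[OF d3[unfolded eq] op])
    show "\<theta> \<in> {x. 0 < sin x * sin \<theta>}" using assms by (cases "sin \<theta> > 0") (auto simp: mult_pos_pos mult_neg_neg)
    show "sgn (sin \<theta>) * sqrt (2 * G (sp x)) = Y x" if "x \<in> {x. 0 < sin x * sin \<theta>}" for x
    proof -
      have "sgn (sin x) = sgn (sin \<theta>)" using that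
        by (auto simp: sgn_real_def zero_less_mult_iff)
      then show ?thesis by (simp add: Y_def)
    qed
  qed
qed

lemma node_iso: assumes "sin (th t) = 0" "z \<noteq> t" "\<bar>z - t\<bar> < gl * pi"
  shows "sin (th z) \<noteq> 0"
proof
  assume "sin (th z) = 0"
  then obtain j :: int where j: "th z = of_int j * pi" by (auto simp: sin_zero_iff_int2)
  obtain i :: int where i: "th t = of_int i * pi" using assms(1) by (auto simp: sin_zero_iff_int2)
  have "\<bar>th z - th t\<bar> \<le> \<bar>z - t\<bar> / gl" by (rule th_lip)
  also have "\<dots> < pi" using assms(3) gl_pos by (simp add: field_simps)
  finally have "\<bar>of_int j - of_int i\<bar> * pi < 1 * pi" using i j by (simp add: abs_mult left_diff_distrib[symmetric])
  then have "\<bar>of_int j - of_int i :: real\<bar> < 1" by (rule mult_right_less_imp_less) simp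
  then have "j = i" by linarith
  then have "th z = th t" using i j by simp
  then have "tau (th z) = tau (th t)" by simp
  then show False using assms(2) by (simp add: tau_th)
qed

lemma ww_isCont: "isCont ww t"
  unfolding ww_def using th_isCont sp_isCont by (rule isCont_o2)

lemma yy_isCont: "isCont yy t"
  unfolding yy_def using th_isCont Y_isCont by (rule isCont_o2)

lemma ww_deriv_off: assumes "sin (th t) \<noteq> 0" shows "(ww has_real_derivative yy t) (at t)"
proof -
  let ?\<theta> = "th t"
  have d: "(ww has_real_derivative ((\<beta> - \<alpha>) * sin ?\<theta> / 2) * inverse (gg ?\<theta>)) (at t)"
    unfolding ww_def by (rule DERIV_chain2[OF sp_deriv th_deriv[OF assms]])
  have gp: "gg ?\<theta> > 0" using gg_bounds[of ?\<theta>] gl_pos by auto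
  have "((\<beta> - \<alpha>) * sin ?\<theta> / 2) * inverse (gg ?\<theta>) = Y ?\<theta>"
  proof -
    have "Y ?\<theta> * gg ?\<theta> = sgn (sin ?\<theta>) * ((\<beta> - \<alpha>) / 2 * \<bar>sin ?\<theta>\<bar>)"
      using key_alg[OF assms] by (simp add: Y_def mult.commute mult.left_commute)
    also have "\<dots> = (\<beta> - \<alpha>) * sin ?\<theta> / 2"
    proof -
      have "sgn (sin ?\<theta>) * \<bar>sin ?\<theta>\<bar> = sin ?\<theta>" by (simp add: sgn_real_def abs_if)
      then show ?thesis by (metis (no_types, opaque_lifting) mult.left_commute times_divide_eq_left times_divide_eq_right)
    qed
    finally show ?thesis using gp by (simp add: field_simps)
  qed
  then show ?thesis using d by (simp add: yy_def)
qed

lemma ww_deriv: "(ww has_real_derivative yy t) (at t)"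
proof (cases "sin (th t) = 0")
  case False then show ?thesis by (rule ww_deriv_off)
next
  case True
  show ?thesis
  proof (rule deriv_from_limit[OF ww_isCont _ _ yy_isCont])
    show "0 < gl * pi" using gl_pos by simp
    show "(ww has_real_derivative yy z) (at z)" if "z \<noteq> t" "\<bar>z - t\<bar> < gl * pi" for z
      using node_iso[OF True that] by (rule ww_deriv_off)
  qed
qed

lemma ww_range: "\<alpha> \<le> ww t \<and> ww t \<le> \<beta>" using sp_range by (simp add: ww_def)

lemma Fww_isCont: "isCont (\<lambda>t. F (ww t)) t"
proof -
  have "continuous_on UNIV ww" using ww_isCont by (simp add: continuous_on_eq_continuous_at)
  then have "continuous_on UNIV (\<lambda>t. F (ww t))"
    using ww_range by (intro continuous_on_compose2[OF cF]) auto
  then show ?thesis by (simp add: continuous_on_eq_continuous_at)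
qed

lemma yy_deriv_off: assumes "sin (th t) \<noteq> 0" shows "(yy has_real_derivative F (ww t)) (at t)"
proof -
  let ?\<theta> = "th t"
  let ?D = "sgn (sin ?\<theta>) * (F (sp ?\<theta>) * ((\<beta> - \<alpha>) * sin ?\<theta> / 2)) / sqrt (2 * G (sp ?\<theta>))"
  have d: "(yy has_real_derivative ?D * inverse (gg ?\<theta>)) (at t)"
    unfolding yy_def by (rule DERIV_chain2[OF Y_deriv[OF assms] th_deriv[OF assms]])
  have gp: "gg ?\<theta> > 0" using gg_bounds[of ?\<theta>] gl_pos by auto
  have Gp: "G (sp ?\<theta>) > 0" using G_pos sp_int[OF assms] by simp
  have k: "gg ?\<theta> * sqrt (2 * G (sp ?\<theta>)) = (\<beta> - \<alpha>) / 2 * \<bar>sin ?\<theta>\<bar>" by (rule key_alg[OF assms])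
  have "?D * inverse (gg ?\<theta>) = sgn (sin ?\<theta>) * (F (sp ?\<theta>) * ((\<beta> - \<alpha>) * sin ?\<theta> / 2)) / (gg ?\<theta> * sqrt (2 * G (sp ?\<theta>)))"
    by (simp add: field_simps)
  also have "\<dots> = sgn (sin ?\<theta>) * (F (sp ?\<theta>) * ((\<beta> - \<alpha>) * sin ?\<theta> / 2)) / ((\<beta> - \<alpha>) / 2 * \<bar>sin ?\<theta>\<bar>)"
    by (simp only: k)
  also have "\<dots> = F (sp ?\<theta>)"
  proof -
    have e: "sgn (sin ?\<theta>) * (F (sp ?\<theta>) * ((\<beta> - \<alpha>) * sin ?\<theta> / 2)) = F (sp ?\<theta>) * ((\<beta> - \<alpha>) / 2 * \<bar>sin ?\<theta>\<bar>)"
    proof -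
      have "sgn (sin ?\<theta>) * (F (sp ?\<theta>) * ((\<beta> - \<alpha>) * sin ?\<theta> / 2)) = F (sp ?\<theta>) * ((\<beta> - \<alpha>) / 2) * (sgn (sin ?\<theta>) * sin ?\<theta>)"
        by (simp add: algebra_simps)
      also have "\<dots> = F (sp ?\<theta>) * ((\<beta> - \<alpha>) / 2 * \<bar>sin ?\<theta>\<bar>)" by (simp only: sgn_mul_self mult.assoc)
      finally show ?thesis .
    qed
    have Cnz: "(\<beta> - \<alpha>) / 2 * \<bar>sin ?\<theta>\<bar> \<noteq> 0" using ab assms by simp
    show ?thesis by (simp only: e nonzero_mult_div_cancel_right[OF Cnz])
  qed
  finally show ?thesis using d by (simp add: ww_def)
qed

lemma yy_deriv: "(yy has_real_derivative F (ww t)) (at t)"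
proof (cases "sin (th t) = 0")
  case False then show ?thesis by (rule yy_deriv_off)
next
  case True
  show ?thesis
  proof (rule deriv_from_limit[OF yy_isCont _ _ Fww_isCont])
    show "0 < gl * pi" using gl_pos by simp
    show "(yy has_real_derivative F (ww z)) (at z)" if "z \<noteq> t" "\<bar>z - t\<bar> < gl * pi" for z
      using node_iso[OF True that] by (rule yy_deriv_off)
  qed
qed


lemma hits: "\<exists>t<T. ww t = \<alpha>" "\<exists>t<T. ww t = \<beta>"
proof -
  obtain n :: nat where n: "\<bar>T\<bar> / (gl * pi) < real n" using reals_Archimedean2 by blast
  have glpi: "gl * pi > 0" using gl_pos by simp
  have nT: "\<bar>T\<bar> < gl * pi * real n" using n glpi by (simp add: field_simps)
  define \<theta>1 where "\<theta>1 = - (real (2 * n) * pi)"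
  define \<theta>2 where "\<theta>2 = - (real (2 * n + 1) * pi)"
  have p0: "0 \<le> gl * pi * real n" using glpi by simp
  have A1: "tau \<theta>1 \<le> - (gl * pi * real (2 * n))"
  proof -
    have "\<theta>1 \<le> 0" by (simp add: \<theta>1_def)
    then have "gl * (0 - \<theta>1) \<le> tau 0 - tau \<theta>1" using tau_bounds by blast
    moreover have "gl * (0 - \<theta>1) = gl * pi * real (2 * n)" by (simp add: \<theta>1_def)
    ultimately show ?thesis using tau0 by linarith
  qed
  have B1: "gl * pi * real (2 * n) = 2 * (gl * pi * real n)" by simp
  have t1: "tau \<theta>1 < T" using A1 B1 p0 nT by linarith
  have A2: "tau \<theta>2 \<le> - (gl * pi * real (2 * n + 1))"
  proof -
    have "\<theta>2 \<le> 0" by (simp add: \<theta>2_def)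
    then have "gl * (0 - \<theta>2) \<le> tau 0 - tau \<theta>2" using tau_bounds by blast
    moreover have "gl * (0 - \<theta>2) = gl * pi * real (2 * n + 1)" by (simp add: \<theta>2_def)
    ultimately show ?thesis using tau0 by linarith
  qed
  have B2: "gl * pi * real (2 * n + 1) = 2 * (gl * pi * real n) + gl * pi" by (simp add: algebra_simps)
  have t2: "tau \<theta>2 < T" using A2 B2 p0 nT glpi by linarith
  have c1: "cos \<theta>1 = 1" unfolding \<theta>1_def cos_minus cos_npi by simp
  have c2: "cos \<theta>2 = -1" unfolding \<theta>2_def cos_minus cos_npi by simp
  show "\<exists>t<T. ww t = \<alpha>"
    using t1 c1 by (intro exI[of _ "tau \<theta>1"]) (simp add: ww_def th_tau sp_def)
  show "\<exists>t<T. ww t = \<beta>"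
    using t2 c2 by (intro exI[of _ "tau \<theta>2"]) (simp add: ww_def th_tau sp_def field_simps)
qed

end

lemma osc_exists:
  fixes G F :: "real \<Rightarrow> real" and \<alpha> \<beta> m1 m2 :: real
  assumes "osc G F \<alpha> \<beta> m1 m2"
  shows "\<exists>w y. (\<forall>t. (w has_real_derivative y t) (at t)) \<and> (\<forall>t. (y has_real_derivative F (w t)) (at t))
    \<and> (\<forall>t. \<alpha> \<le> w t \<and> w t \<le> \<beta>) \<and> (\<forall>T. \<exists>t<T. w t = \<alpha>) \<and> (\<forall>T. \<exists>t<T. w t = \<beta>)"
  using osc.ww_deriv[OF assms] osc.yy_deriv[OF assms] osc.ww_range[OF assms] osc.hits[OF assms]
  by blast




lemma mvt_lower:
  fixes G F :: "real \<Rightarrow> real"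
  assumes "a \<le> b" "\<And>x. a \<le> x \<Longrightarrow> x \<le> b \<Longrightarrow> (G has_real_derivative F x) (at x)"
    "\<And>x. a \<le> x \<Longrightarrow> x \<le> b \<Longrightarrow> k \<le> F x"
  shows "k * (b - a) \<le> G b - G a"
proof (cases "a = b")
  case True then show ?thesis by simp
next
  case False
  then have "a < b" using assms(1) by simp
  then obtain z where z: "a < z" "z < b" "G b - G a = (b - a) * F z"
    using MVT2[of a b G F] assms(2) by auto
  have "k * (b - a) \<le> F z * (b - a)" using assms(3)[of z] z \<open>a < b\<close> by (intro mult_right_mono) auto
  then show ?thesis using z by (simp add: mult.commute)
qed

lemma mvt_upper:
  fixes G F :: "real \<Rightarrow> real"
  assumes "a \<le> b" "\<And>x. a \<le> x \<Longrightarrow> x \<le> b \<Longrightarrow> (G has_real_derivative F x) (at x)"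
    "\<And>x. a \<le> x \<Longrightarrow> x \<le> b \<Longrightarrow> F x \<le> k"
  shows "G b - G a \<le> k * (b - a)"
proof -
  have "(-k) * (b - a) \<le> (\<lambda>x. - G x) b - (\<lambda>x. - G x) a"
  proof (rule mvt_lower[where F="\<lambda>x. - F x"])
    show "a \<le> b" by (rule assms(1))
    show "((\<lambda>x. - G x) has_real_derivative - F x) (at x)" if "a \<le> x" "x \<le> b" for x
      using assms(2)[OF that] by (rule DERIV_minus)
    show "-k \<le> - F x" if "a \<le> x" "x \<le> b" for x using assms(3)[OF that] by simp
  qed
  then show ?thesis by simp
qed

lemma aux_lin1: "(a::real) \<le> b \<Longrightarrow> 0 \<le> a \<Longrightarrow> 0 \<le> b \<Longrightarrow> 0 < x \<Longrightarrow> x \<le> 3 \<Longrightarrow> \<bar>(x - a) / 4\<bar> \<le> (3 + b) / 4"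
  by (auto simp: abs_le_iff)

lemma aux_lin2: "(c::real) \<le> a \<Longrightarrow> 9 / 8 \<le> c \<Longrightarrow> 0 \<le> a - 3^2 / 8"
  by simp

definition FF :: "real \<Rightarrow> real \<Rightarrow> real" where "FF p x = (x - x powr p) / 4"
definition VV :: "real \<Rightarrow> real \<Rightarrow> real" where "VV p x = x powr (p + 1) / (4 * (p + 1)) - x^2 / 8"
definition GG :: "real \<Rightarrow> real \<Rightarrow> real" where "GG p x = VV p (1/2) - VV p x"

context
  fixes p :: real
  assumes p1: "1 < p"
begin

lemma GG_deriv: assumes "0 < x" shows "(GG p has_real_derivative FF p x) (at x)"
proof -
  have d1: "((\<lambda>x. x powr (p + 1)) has_real_derivative (p + 1) * x powr p) (at x)"
    using has_real_derivative_powr[OF assms, of "p + 1"] by simp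
  have d2: "((\<lambda>x. x^2) has_real_derivative 2 * x) (at x)"
    using DERIV_pow[of 2 x] by (simp add: power_one_right)
  have D: "((\<lambda>x. VV p (1/2) - (inverse (4 * (p + 1)) * x powr (p + 1) - inverse 8 * x^2)) has_real_derivative
      0 - (inverse (4 * (p + 1)) * ((p + 1) * x powr p) - inverse 8 * (2 * x))) (at x)"
    by (intro DERIV_diff DERIV_const DERIV_cmult d1 d2)
  have E: "inverse (4 * (p + 1)) * ((p + 1) * x powr p) = x powr p / 4"
    using p1 by (simp add: field_simps)
  have GGeq: "GG p = (\<lambda>x. VV p (1/2) - (inverse (4 * (p + 1)) * x powr (p + 1) - inverse 8 * x^2))"
    by (rule ext) (simp only: GG_def VV_def divide_inverse_commute)
  have V: "0 - (inverse (4 * (p + 1)) * ((p + 1) * x powr p) - inverse 8 * (2 * x)) = FF p x"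
    unfolding E FF_def by simp
  show ?thesis using D unfolding GGeq V .
qed

lemma FF_cont: assumes "0 < a" shows "continuous_on {a..b} (FF p)"
  unfolding FF_def using assms by (intro continuous_intros) auto

lemma powr_split: assumes "0 < x" shows "x powr p = x * x powr (p - 1)"
proof -
  have "x powr p = x powr (1 + (p - 1))" by simp
  also have "\<dots> = x powr 1 * x powr (p - 1)" by (rule powr_add)
  also have "\<dots> = x * x powr (p - 1)" using assms by simp
  finally show ?thesis .
qed

lemma FF_alt: assumes "0 < x" shows "FF p x = x * (1 - x powr (p - 1)) / 4"
  using powr_split[OF assms] by (simp add: FF_def algebra_simps)

lemma FF_lower1: assumes "1/2 \<le> x" "x \<le> 3/4" shows "(1 - (3/4) powr (p - 1)) / 8 \<le> FF p x"
proof -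
  have "x powr (p - 1) \<le> (3/4) powr (p - 1)" using assms p1 by (intro powr_mono2) auto
  moreover have "(3/4::real) powr (p - 1) < 1 powr (p - 1)" using p1 by (intro powr_less_mono2) auto
  ultimately have "(1/2) * (1 - (3/4) powr (p - 1)) \<le> x * (1 - x powr (p - 1))"
    using assms by (intro mult_mono) auto
  then show ?thesis using assms by (simp add: FF_alt)
qed

lemma k1_pos: "0 < (1 - (3/4::real) powr (p - 1)) / 8"
proof -
  have "(3/4::real) powr (p - 1) < 1 powr (p - 1)" using p1 by (intro powr_less_mono2) auto
  then show ?thesis by simp
qed

lemma FF_nonneg: assumes "0 < x" "x \<le> 1" shows "0 \<le> FF p x"
proof -
  have "x powr (p - 1) \<le> 1 powr (p - 1)" using assms p1 by (intro powr_mono2) auto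
  then show ?thesis using assms by (simp add: FF_alt)
qed

lemma FF_nonpos: assumes "1 \<le> x" shows "FF p x \<le> 0"
proof -
  have "1 \<le> x powr (p - 1)" using assms p1 by (intro ge_one_powr_ge_zero) auto
  then have "x * (1 - x powr (p - 1)) \<le> 0" using assms by (intro mult_nonneg_nonpos) auto
  then show ?thesis using assms by (simp add: FF_alt)
qed

lemma FF_upper2: assumes "1 \<le> m" "m \<le> x" shows "FF p x \<le> - ((m powr (p - 1) - 1) / 4)"
proof -
  have q: "m powr (p - 1) \<le> x powr (p - 1)" using assms p1 by (intro powr_mono2) auto
  have "1 \<le> m powr (p - 1)" using assms p1 by (intro ge_one_powr_ge_zero) auto
  then have "x * (1 - x powr (p - 1)) \<le> 1 * (1 - x powr (p - 1))"
    using q assms by (intro mult_right_mono_neg) auto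
  then have "x * (1 - x powr (p - 1)) \<le> 1 - m powr (p - 1)" using q by simp
  moreover have "FF p x = x * (1 - x powr (p - 1)) / 4" using assms by (intro FF_alt) simp
  ultimately have "FF p x \<le> (1 - m powr (p - 1)) / 4" by (metis divide_right_mono zero_le_numeral)
  then show ?thesis by (simp add: minus_divide_left)
qed

lemma FF_abs: assumes "0 < x" "x \<le> 3" shows "\<bar>FF p x\<bar> \<le> (3 + 3 powr p) / 4"
proof -
  have "x powr p \<le> 3 powr p" using assms p1 by (intro powr_mono2) auto
  moreover have "0 \<le> x powr p" by simp
  moreover have "0 \<le> (3::real) powr p" by simp
  ultimately show ?thesis using assms unfolding FF_def by (intro aux_lin1)
qed

lemma VV_half: "VV p (1/2) \<le> 0"
proof -
  have "(1/2::real) powr (p + 1) \<le> (1/2) powr 2" using p1 by (intro powr_mono') auto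
  then have "(1/2::real) powr (p + 1) \<le> 1/4" by (simp add: powr_numeral power2_eq_square)
  moreover have "4 * (p + 1) \<ge> 8" using p1 by simp
  ultimately have "(1/2::real) powr (p + 1) / (4 * (p + 1)) \<le> (1/4) / 8"
    by (intro frac_le) auto
  then show ?thesis unfolding VV_def by (simp add: power2_eq_square)
qed

lemma VV_3: "0 \<le> VV p 3"
proof -
  have "ln (exp 1) \<le> ln (3::real)" using exp_le by (subst ln_le_cancel_iff) auto
  then have l3: "1 \<le> ln (3::real)" by simp
  have e: "3 powr (p - 1) = exp ((p - 1) * ln 3)" by (simp add: powr_def)
  have "1 + (p - 1) * ln 3 \<le> exp ((p - 1) * ln 3)" by (rule exp_ge_add_one_self)
  moreover have "(p - 1) * 1 \<le> (p - 1) * ln 3" using l3 p1 by (intro mult_left_mono) auto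
  ultimately have a: "p \<le> 3 powr (p - 1)" unfolding e by (smt (verit))
  have "(3::real) powr (p + 1) = 3 powr ((p - 1) + 2)" by (simp add: algebra_simps)
  also have "\<dots> = 3 powr (p - 1) * 3 powr 2" by (rule powr_add)
  also have "\<dots> = 3 powr (p - 1) * 9" by (simp add: powr_numeral)
  finally have b: "9 * p \<le> (3::real) powr (p + 1)" using a by linarith
  have c: "9 / 8 \<le> 9 * p / (4 * (p + 1))" using p1 by (simp add: field_simps)
  have "9 * p / (4 * (p + 1)) \<le> (3::real) powr (p + 1) / (4 * (p + 1))"
    using b p1 by (intro divide_right_mono) auto
  then show ?thesis using c unfolding VV_def by (intro aux_lin2)
qed


lemma GG_half: "GG p (1/2) = 0" by (simp add: GG_def)

lemma GG_d: "\<And>y. a \<le> y \<Longrightarrow> y \<le> b \<Longrightarrow> (GG p has_real_derivative FF p y) (at y)" if "0 < a" for a b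
  using GG_deriv that by simp

lemma GG_1: "(1 - (3/4::real) powr (p - 1)) / 8 / 4 \<le> GG p 1"
proof -
  have "(1 - (3/4::real) powr (p - 1)) / 8 * (3/4 - 1/2) \<le> GG p (3/4) - GG p (1/2)"
    by (rule mvt_lower[OF _ GG_d FF_lower1]) auto
  moreover have "0 * (1 - 3/4) \<le> GG p 1 - GG p (3/4)"
    by (rule mvt_lower[OF _ GG_d FF_nonneg]) auto
  ultimately show ?thesis by (simp add: GG_half)
qed

lemma exists_beta: "\<exists>\<beta>. 1 < \<beta> \<and> \<beta> \<le> 3 \<and> GG p \<beta> = 0"
proof -
  have g1: "0 < GG p 1" using GG_1 k1_pos by linarith
  have g3: "GG p 3 \<le> 0" using VV_half VV_3 by (simp add: GG_def)
  have "\<forall>x. 1 \<le> x \<and> x \<le> 3 \<longrightarrow> isCont (GG p) x"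
  proof (intro allI impI)
    fix x :: real assume "1 \<le> x \<and> x \<le> 3"
    then have "0 < x" by simp
    from GG_deriv[OF this] show "isCont (GG p) x" by (rule DERIV_isCont)
  qed
  then obtain \<beta> where b: "1 \<le> \<beta>" "\<beta> \<le> 3" "GG p \<beta> = 0"
    using IVT2[of "GG p" 3 0 1] g1 g3 by auto
  then have "\<beta> \<noteq> 1" using g1 by auto
  then have "1 < \<beta>" using b(1) by linarith
  then show ?thesis using b by (intro exI[of _ \<beta>]) simp
qed

end

lemma min_prod1: "0 \<le> a \<Longrightarrow> 0 \<le> b \<Longrightarrow> a * b \<le> min a b * (a + b)" for a b :: real
  by (cases "a \<le> b") (auto simp: min_def algebra_simps intro: mult_left_mono mult_right_mono)

lemma min_prod2: "0 \<le> a \<Longrightarrow> 0 \<le> b \<Longrightarrow> min a b * (a + b) \<le> 2 * (a * b)" for a b :: real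
proof (cases "a \<le> b")
  case True
  assume "0 \<le> a" "0 \<le> b"
  then have "a * a \<le> a * b" using True by (intro mult_left_mono) auto
  then show ?thesis using True by (simp add: min_def algebra_simps)
next
  case False
  assume "0 \<le> a" "0 \<le> b"
  then have "b * b \<le> a * b" using False by (intro mult_right_mono) auto
  then show ?thesis using False by (simp add: min_def algebra_simps)
qed


context
  fixes p :: real
  assumes p1: "1 < p"
begin

lemma osc_inst: "\<exists>\<beta> m1 m2. 1 < \<beta> \<and> osc (GG p) (FF p) (1/2) \<beta> m1 m2"
proof -
  obtain \<beta> where b: "1 < \<beta>" "\<beta> \<le> 3" "GG p \<beta> = 0" using exists_beta[OF p1] by blast
  define k1 where "k1 = (1 - (3/4::real) powr (p - 1)) / 8"
  define m' where "m' = (1 + \<beta>) / 2"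
  define k2 where "k2 = (m' powr (p - 1) - 1) / 4"
  define L where "L = (3 + 3 powr p) / 4"
  define k where "k = min (k1 / 2) (k2 * (\<beta> - 1) / 5)"
  have k1p: "0 < k1" using k1_pos[OF p1] by (simp add: k1_def)
  have m'1: "1 < m'" "m' < \<beta>" using b by (auto simp: m'_def)
  have "1 powr (p - 1) < m' powr (p - 1)" using m'1 p1 by (intro powr_less_mono2) auto
  then have k2p: "0 < k2" by (simp add: k2_def)
  have kp: "0 < k" using k1p k2p b by (simp add: k_def)
  have kk1: "k \<le> k1 / 2" and kk2: "k \<le> k2 * (\<beta> - 1) / 5" by (simp_all add: k_def)
  have k2le: "k2 * (\<beta> - 1) / 5 \<le> k2" using k2p b by (simp add: field_simps)
  have Lp: "0 \<le> L" by (simp add: L_def add_nonneg_nonneg)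
  have dG: "(GG p has_real_derivative FF p y) (at y)" if "1/2 \<le> y" for y
    using GG_deriv[OF p1] that by simp
  have FL: "\<bar>FF p y\<bar> \<le> L" if "1/2 \<le> y" "y \<le> \<beta>" for y
    using FF_abs[OF p1, of y] that b by (simp add: L_def)
  have low: "k * min (x - 1/2) (\<beta> - x) \<le> GG p x" if x: "1/2 \<le> x" "x \<le> \<beta>" for x
  proof -
    have mn: "0 \<le> min (x - 1/2) (\<beta> - x)" using x by simp
    have mle: "min (x - 1/2) (\<beta> - x) \<le> x - 1/2" "min (x - 1/2) (\<beta> - x) \<le> \<beta> - x" by simp_all
    consider "x \<le> 3/4" | "3/4 \<le> x" "x \<le> 1" | "1 \<le> x" "x \<le> m'" | "m' \<le> x" by linarith
    then show ?thesis
    proof cases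
      case 1
      have "k1 * (x - 1/2) \<le> GG p x - GG p (1/2)"
        by (rule mvt_lower[where F="FF p"]) (use x 1 in \<open>auto intro: dG FF_lower1[OF p1, unfolded k1_def[symmetric]]\<close>)
      moreover have "k * min (x - 1/2) (\<beta> - x) \<le> k1 * (x - 1/2)"
        using kk1 kp k1p mn mle(1) by (intro mult_mono) linarith+
      ultimately show ?thesis by (simp add: GG_half[OF p1])
    next
      case 2
      have "k1 * (3/4 - 1/2) \<le> GG p (3/4) - GG p (1/2)"
        by (rule mvt_lower[where F="FF p"]) (auto intro: dG FF_lower1[OF p1, unfolded k1_def[symmetric]])
      moreover have "0 * (x - 3/4) \<le> GG p x - GG p (3/4)"
        by (rule mvt_lower[where F="FF p"]) (use 2 in \<open>auto intro: dG FF_nonneg[OF p1]\<close>)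
      moreover have "min (x - 1/2) (\<beta> - x) \<le> 1/2" using mle(1) 2 by linarith
      then have "k * min (x - 1/2) (\<beta> - x) \<le> (k1/2) * (1/2)"
        using kk1 kp k1p mn by (intro mult_mono) auto
      ultimately show ?thesis by (simp add: GG_half[OF p1])
    next
      case 3
      have "GG p m' - GG p x \<le> 0 * (m' - x)"
        by (rule mvt_upper[where F="FF p"]) (use 3 in \<open>auto intro: dG FF_nonpos[OF p1]\<close>)
      moreover have "GG p \<beta> - GG p m' \<le> (- k2) * (\<beta> - m')"
      proof (rule mvt_upper[where F="FF p"])
        show "m' \<le> \<beta>" using m'1 by simp
        show "(GG p has_real_derivative FF p y) (at y)" if "m' \<le> y" "y \<le> \<beta>" for y
          using that m'1 by (intro dG) simp
        show "FF p y \<le> - k2" if "m' \<le> y" "y \<le> \<beta>" for y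
          using FF_upper2[OF p1, of m' y] that m'1 by (simp add: k2_def)
      qed
      moreover have "min (x - 1/2) (\<beta> - x) \<le> 5/2" using mle(2) 3 b by linarith
      then have "k * min (x - 1/2) (\<beta> - x) \<le> (k2 * (\<beta> - 1) / 5) * (5/2)"
        using kk2 kp k2p mn b by (intro mult_mono) auto
      moreover have "(k2 * (\<beta> - 1) / 5) * (5/2) = k2 * (\<beta> - m')" by (simp add: m'_def field_simps)
      moreover have "(- k2) * (\<beta> - m') = - (k2 * (\<beta> - m'))" by simp
      ultimately show ?thesis using b(3) by linarith
    next
      case 4
      have "GG p \<beta> - GG p x \<le> (- k2) * (\<beta> - x)"
      proof (rule mvt_upper[where F="FF p"])
        show "x \<le> \<beta>" using x by simp
        show "(GG p has_real_derivative FF p y) (at y)" if "x \<le> y" "y \<le> \<beta>" for y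
          using that x by (intro dG) simp
        show "FF p y \<le> - k2" if "x \<le> y" "y \<le> \<beta>" for y
          using FF_upper2[OF p1, of m' y] that m'1 4 by (simp add: k2_def)
      qed
      moreover have "k * min (x - 1/2) (\<beta> - x) \<le> k2 * (\<beta> - x)"
        using kk2 k2le kp k2p mn mle(2) x by (intro mult_mono) linarith+
      moreover have "(- k2) * (\<beta> - x) = - (k2 * (\<beta> - x))" by simp
      ultimately show ?thesis using b(3) by linarith
    qed
  qed
  have up: "GG p x \<le> L * min (x - 1/2) (\<beta> - x)" if x: "1/2 \<le> x" "x \<le> \<beta>" for x
  proof -
    have "GG p x - GG p (1/2) \<le> L * (x - 1/2)"
    proof (rule mvt_upper[where F="FF p"])
      show "(GG p has_real_derivative FF p y) (at y)" if "1/2 \<le> y" "y \<le> x" for y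
        using that by (intro dG) simp
      show "FF p y \<le> L" if "1/2 \<le> y" "y \<le> x" for y
        using FL[of y] that x by simp
    qed (use x in simp)
    moreover have "(- L) * (\<beta> - x) \<le> GG p \<beta> - GG p x"
    proof (rule mvt_lower[where F="FF p"])
      show "(GG p has_real_derivative FF p y) (at y)" if "x \<le> y" "y \<le> \<beta>" for y
        using that x by (intro dG) simp
      show "- L \<le> FF p y" if "x \<le> y" "y \<le> \<beta>" for y
        using FL[of y] that x by simp
    qed (use x in simp)
    ultimately show ?thesis using b by (simp add: GG_half[OF p1] min_def)
  qed
  define D where "D = \<beta> - 1/2"
  have Dp: "0 < D" using b by (simp add: D_def)
  show ?thesis
  proof (intro exI conjI)
    show "1 < \<beta>" by (rule b(1))
    show "osc (GG p) (FF p) (1/2) \<beta> (k / D) (2 * L / D)"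
    proof
      show "1/2 < \<beta>" using b by simp
      show "(GG p has_real_derivative FF p x) (at x)" if "1/2 \<le> x" "x \<le> \<beta>" for x
        using that by (intro dG)
      show "continuous_on {1/2..\<beta>} (FF p)" by (rule FF_cont[OF p1]) simp
      show "0 < k / D" using kp Dp by simp
      fix x assume x: "1/2 \<le> x" "x \<le> \<beta>"
      define a c where "a = x - 1/2" and "c = \<beta> - x"
      have ac: "0 \<le> a" "0 \<le> c" "a + c = D" using x by (auto simp: a_def c_def D_def)
      have "k / D * (a * c) \<le> k / D * (min a c * (a + c))"
        using min_prod1[OF ac(1,2)] kp Dp by (intro mult_left_mono) auto
      also have "\<dots> = k * min a c" using ac(3) Dp by simp
      also have "\<dots> \<le> GG p x" using low[OF x] by (simp add: a_def c_def)
      finally have l: "k / D * (a * c) \<le> GG p x" .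
      have "GG p x \<le> L * min a c" using up[OF x] by (simp add: a_def c_def)
      also have "\<dots> = L / D * (min a c * (a + c))" using ac(3) Dp by simp
      also have "\<dots> \<le> L / D * (2 * (a * c))"
        using min_prod2[OF ac(1,2)] Lp Dp by (intro mult_left_mono) auto
      also have "\<dots> = 2 * L / D * (a * c)" by simp
      finally have u: "GG p x \<le> 2 * L / D * (a * c)" .
      show "k / D * ((x - 1/2) * (\<beta> - x)) \<le> GG p x \<and> GG p x \<le> 2 * L / D * ((x - 1/2) * (\<beta> - x))"
        using l u by (simp add: a_def c_def)
    qed
  qed
qed

end


lemma powr_inv_x: "0 < x \<Longrightarrow> x powr a * inverse x = x powr (a - 1)" for x a :: real
  by (simp add: powr_diff divide_inverse)

theorem theorem5p9:
  fixes \<sigma> p :: real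
  assumes "\<sigma> < -2" and "p > -1 - \<sigma>" and "exp_a \<sigma> p = 1/2"
  shows "\<exists>u u' u'' :: real \<Rightarrow> real.
           (\<forall>x>0. u x > 0) \<and>
           (\<forall>x>0. (u has_real_derivative u' x) (at x)) \<and>
           (\<forall>x>0. (u' has_real_derivative u'' x) (at x)) \<and>
           continuous_on {0<..} u'' \<and>
           (\<forall>x>0. u'' x + x powr \<sigma> * (u x) powr p = 0) \<and>
           sign_changes_inf_near_0 (\<lambda>x. u x - u_sing \<sigma> p x) \<and>
           bounded ((\<lambda>x. u x / u_sing \<sigma> p x) ` {0<..}) \<and>
           \<not> (\<exists>L. ((\<lambda>x. u x / u_sing \<sigma> p x) \<longlongrightarrow> L) (at_right 0))"
proof -
  have p1p: "1 - p \<noteq> 0"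
  proof
    assume "1 - p = 0"
    then show False using assms(3) by (simp add: exp_a_def)
  qed
  then have pe: "p = -3 - 2 * \<sigma>" using assms(3) by (simp add: exp_a_def field_simps)
  have p1: "1 < p" using pe assms(1) by simp
  define c where "c = const_a \<sigma> p"
  have c_eq: "c = (1/4) powr (1 / (p - 1))" unfolding c_def const_a_def assms(3) by simp
  have cpos: "0 < c" by (simp add: c_eq)
  have cp1: "c powr (p - 1) = 1/4"
    using p1 by (simp add: c_eq powr_powr)
  have cp: "c powr p = c / 4"
  proof -
    have "c powr p = c powr (1 + (p - 1))" by simp
    also have "\<dots> = c powr 1 * c powr (p - 1)" by (rule powr_add)
    finally show ?thesis using cpos cp1 by simp
  qed
  have us: "u_sing \<sigma> p x = c * x powr (1/2)" for x
    unfolding u_sing_def c_def assms(3) ..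
  obtain \<beta> m1 m2 where b1: "1 < \<beta>" and os: "osc (GG p) (FF p) (1/2) \<beta> m1 m2"
    using osc_inst[OF p1] by blast
  obtain w y where wd: "\<And>t. (w has_real_derivative y t) (at t)"
    and yd: "\<And>t. (y has_real_derivative FF p (w t)) (at t)"
    and wr: "\<And>t. 1/2 \<le> w t \<and> w t \<le> \<beta>"
    and h1: "\<And>T. \<exists>t<T. w t = 1/2" and h2: "\<And>T. \<exists>t<T. w t = \<beta>"
    using osc_exists[OF os] by blast
  define u where "u x = c * x powr (1/2) * w (ln x)" for x
  define u' where "u' x = c * x powr (-1/2) * (w (ln x) / 2 + y (ln x))" for x
  define u'' where "u'' x = - (c / 4) * x powr (-3/2) * (w (ln x)) powr p" for x
  have wpos: "0 < w t" for t using wr[of t] by linarith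
  have wc: "isCont w t" for t using wd by (rule DERIV_isCont)
  have ratio: "u x / u_sing \<sigma> p x = w (ln x)" if "0 < x" for x
    using that cpos by (simp add: u_def us)
  have diffu: "u x - u_sing \<sigma> p x = c * x powr (1/2) * (w (ln x) - 1)" for x
    by (simp add: u_def us algebra_simps)
  show ?thesis
  proof (intro exI conjI)
    show "\<forall>x>0. u x > 0" using cpos wpos by (simp add: u_def)
    show "\<forall>x>0. (u has_real_derivative u' x) (at x)"
    proof (intro allI impI)
      fix x :: real assume x: "0 < x"
      have d1: "((\<lambda>x. x powr (1/2)) has_real_derivative (1/2) * x powr (1/2 - 1)) (at x)"
        by (rule has_real_derivative_powr[OF x])
      have d2: "((\<lambda>x. w (ln x)) has_real_derivative y (ln x) * inverse x) (at x)"
        by (rule DERIV_chain2[OF wd DERIV_ln[OF x]])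
      have dm: "((\<lambda>x. x powr (1/2) * w (ln x)) has_real_derivative ((1/2) * x powr (1/2 - 1)) * w (ln x) + (y (ln x) * inverse x) * x powr (1/2)) (at x)"
        by (rule DERIV_mult[OF d1 d2])
      have ue: "u = (\<lambda>x. c * (x powr (1/2) * w (ln x)))" by (rule ext) (simp add: u_def mult.assoc)
      have "(u has_real_derivative c * ((1/2) * x powr (1/2 - 1) * w (ln x) + y (ln x) * inverse x * x powr (1/2))) (at x)"
        unfolding ue by (rule DERIV_cmult[OF dm])
      moreover have "c * ((1/2) * x powr (1/2 - 1) * w (ln x) + y (ln x) * inverse x * x powr (1/2)) = u' x"
      proof -
        have "inverse x * x powr (1/2) = x powr (-1/2)" using powr_inv_x[OF x, of "1/2"] by (simp add: mult.commute)
        then show ?thesis by (simp add: u'_def algebra_simps)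
      qed
      ultimately show "(u has_real_derivative u' x) (at x)" by simp
    qed
    show "\<forall>x>0. (u' has_real_derivative u'' x) (at x)"
    proof (intro allI impI)
      fix x :: real assume x: "0 < x"
      have d1: "((\<lambda>x. x powr (-1/2)) has_real_derivative (-1/2) * x powr (-1/2 - 1)) (at x)"
        by (rule has_real_derivative_powr[OF x])
      have dw: "((\<lambda>x. w (ln x)) has_real_derivative y (ln x) * inverse x) (at x)"
        by (rule DERIV_chain2[OF wd DERIV_ln[OF x]])
      have dy: "((\<lambda>x. y (ln x)) has_real_derivative FF p (w (ln x)) * inverse x) (at x)"
        by (rule DERIV_chain2[OF yd DERIV_ln[OF x]])
      have d2: "((\<lambda>x. w (ln x) / 2 + y (ln x)) has_real_derivative y (ln x) * inverse x / 2 + FF p (w (ln x)) * inverse x) (at x)"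
        by (rule DERIV_add[OF DERIV_cdivide[OF dw] dy])
      have dm: "((\<lambda>x. x powr (-1/2) * (w (ln x) / 2 + y (ln x))) has_real_derivative
          ((-1/2) * x powr (-1/2 - 1)) * (w (ln x) / 2 + y (ln x)) + (y (ln x) * inverse x / 2 + FF p (w (ln x)) * inverse x) * x powr (-1/2)) (at x)"
        by (rule DERIV_mult[OF d1 d2])
      have ue: "u' = (\<lambda>x. c * (x powr (-1/2) * (w (ln x) / 2 + y (ln x))))" by (rule ext) (simp add: u'_def mult.assoc)
      have D: "(u' has_real_derivative c * (((-1/2) * x powr (-1/2 - 1)) * (w (ln x) / 2 + y (ln x)) + (y (ln x) * inverse x / 2 + FF p (w (ln x)) * inverse x) * x powr (-1/2))) (at x)"
        unfolding ue by (rule DERIV_cmult[OF dm])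
      have X1: "x powr (-1/2 - 1) = x powr (-3/2)" by simp
      have X2: "x powr (-1/2) * inverse x = x powr (-3/2)" using powr_inv_x[OF x, of "-1/2"] by simp
      have "c * (((-1/2) * x powr (-1/2 - 1)) * (w (ln x) / 2 + y (ln x)) + (y (ln x) * inverse x / 2 + FF p (w (ln x)) * inverse x) * x powr (-1/2))
          = c * (((-1/2) * x powr (-3/2)) * (w (ln x) / 2 + y (ln x)) + (y (ln x) / 2 + FF p (w (ln x))) * (x powr (-1/2) * inverse x))"
        unfolding X1 by (simp add: algebra_simps)
      also have "\<dots> = c * (((-1/2) * x powr (-3/2)) * (w (ln x) / 2 + y (ln x)) + (y (ln x) / 2 + FF p (w (ln x))) * x powr (-3/2))"
        unfolding X2 ..
      also have "\<dots> = u'' x" by (simp add: u''_def FF_def field_simps)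
      finally show "(u' has_real_derivative u'' x) (at x)" using D by simp
    qed
    show "continuous_on {0<..} u''"
    proof -
      have "isCont u'' x" if x: "0 < x" for x
      proof -
        have "isCont ln x" using DERIV_ln[OF x] by (rule DERIV_isCont)
        then have wl: "isCont (\<lambda>x. w (ln x)) x" using wc by (rule isCont_o2)
        show ?thesis unfolding u''_def using wl x wpos[of "ln x"]
          by (intro continuous_intros) auto
      qed
      then show ?thesis by (simp add: continuous_on_eq_continuous_at)
    qed
    show "\<forall>x>0. u'' x + x powr \<sigma> * (u x) powr p = 0"
    proof (intro allI impI)
      fix x :: real assume x: "0 < x"
      have "(u x) powr p = c powr p * (x powr (1/2)) powr p * (w (ln x)) powr p"
        by (simp add: u_def powr_mult)
      also have "\<dots> = (c / 4) * x powr (1/2 * p) * (w (ln x)) powr p" by (simp add: cp powr_powr)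
      finally have e1: "x powr \<sigma> * (u x) powr p = (c / 4) * (x powr \<sigma> * x powr (1/2 * p)) * (w (ln x)) powr p"
        by simp
      have "x powr \<sigma> * x powr (1/2 * p) = x powr (\<sigma> + 1/2 * p)" by (simp add: powr_add)
      also have "\<sigma> + 1/2 * p = -3/2" using pe by linarith
      finally have e2: "x powr \<sigma> * x powr (1/2 * p) = x powr (-3/2)" .
      show "u'' x + x powr \<sigma> * (u x) powr p = 0" unfolding e1 e2 by (simp add: u''_def)
    qed
    show "sign_changes_inf_near_0 (\<lambda>x. u x - u_sing \<sigma> p x)"
      unfolding sign_changes_inf_near_0_def
    proof (intro allI impI conjI)
      fix \<epsilon> :: real assume e: "0 < \<epsilon>"
      obtain t1 where t1: "t1 < ln \<epsilon>" "w t1 = \<beta>" using h2 by blast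
      obtain t2 where t2: "t2 < ln \<epsilon>" "w t2 = 1/2" using h1 by blast
      have x1: "0 < exp t1" "exp t1 < \<epsilon>" using exp_less_mono[OF t1(1)] e by auto
      have x2: "0 < exp t2" "exp t2 < \<epsilon>" using exp_less_mono[OF t2(1)] e by auto
      have "0 < c * exp t1 powr (1/2) * (w (ln (exp t1)) - 1)" using cpos t1 b1 by simp
      then show "\<exists>x. 0 < x \<and> x < \<epsilon> \<and> 0 < u x - u_sing \<sigma> p x"
        using x1 by (intro exI[of _ "exp t1"]) (simp add: diffu)
      have "c * exp t2 powr (1/2) * (w (ln (exp t2)) - 1) < 0" using cpos t2
        by (simp add: mult_pos_neg)
      then show "\<exists>x. 0 < x \<and> x < \<epsilon> \<and> u x - u_sing \<sigma> p x < 0"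
        using x2 by (intro exI[of _ "exp t2"]) (simp add: diffu)
    qed
    show "bounded ((\<lambda>x. u x / u_sing \<sigma> p x) ` {0<..})"
      unfolding bounded_iff
    proof (intro exI ballI)
      fix z assume "z \<in> (\<lambda>x. u x / u_sing \<sigma> p x) ` {0<..}"
      then obtain x where x: "0 < x" "z = u x / u_sing \<sigma> p x" by auto
      then have "z = w (ln x)" using ratio by simp
      then show "norm z \<le> \<beta>" using wr[of "ln x"] by auto
    qed
    show "\<not> (\<exists>L. ((\<lambda>x. u x / u_sing \<sigma> p x) \<longlongrightarrow> L) (at_right 0))"
    proof
      assume "\<exists>L. ((\<lambda>x. u x / u_sing \<sigma> p x) \<longlongrightarrow> L) (at_right 0)"
      then obtain L where L: "((\<lambda>x. u x / u_sing \<sigma> p x) \<longlongrightarrow> L) (at_right 0)" by blast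
      have "eventually (\<lambda>x. dist (u x / u_sing \<sigma> p x) L < 1/4) (at_right 0)"
        by (rule tendstoD[OF L]) simp
      then obtain b where b: "0 < b" "\<And>x. 0 < x \<Longrightarrow> x < b \<Longrightarrow> dist (u x / u_sing \<sigma> p x) L < 1/4"
        unfolding eventually_at_right_field by auto
      obtain t1 where t1: "t1 < ln b" "w t1 = \<beta>" using h2 by blast
      obtain t2 where t2: "t2 < ln b" "w t2 = 1/2" using h1 by blast
      have x1: "0 < exp t1" "exp t1 < b" using exp_less_mono[OF t1(1)] b by auto
      have x2: "0 < exp t2" "exp t2 < b" using exp_less_mono[OF t2(1)] b by auto
      have "dist \<beta> L < 1/4" using b(2)[OF x1] ratio[OF x1(1)] t1 by simp
      moreover have "dist (1/2) L < 1/4" using b(2)[OF x2] ratio[OF x2(1)] t2 by simp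
      ultimately show False using b1 unfolding dist_real_def abs_less_iff by linarith
    qed
  qed
qed


end
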